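(* Let $x_c\in\mathbb{R}^{n_0}$, $\varepsilon>0$, $\mathcal{X}=\{x:\|x-x_c\|_\infty\le\varepsilon\}$, and let $J:\mathbb{R}^{n_0}\to\mathbb{R}$ be twice continuously differentiable on an open set containing $\mathcal{X}$, with $\|\nabla^2J(x)\|_2\le\lambda$ for all $x\in\mathcal{X}$, where $\lambda>0$. For $y\in\mathcal{X}$ define $$\overline{J}^1(y)=J(y)+\sup_{x\in\mathcal{X}}\Big(\nabla J(y)^\top(x-y)+\frac{\lambda}{2}\|x-y\|_2^2\Big).$$ Let $\hat\delta=\varepsilon\,\mathrm{sign}(\nabla J(x_c))$ (elementwise, with $\mathrm{sign}(0)=0$), and let $y=x_c+\eta\hat\delta$. Then $\overline{J}^1(y)\le\overline{J}^1(x_c)$ for every $$\eta\in\Big[0,\ \min\Big(\min_i\frac{|\nabla J(x_c)_i|}{\lambda(\|\hat\delta\|_2+|\hat\delta_i|)},\,1\Big)\Big],$$ with the convention that if $\nabla J(x_c)=0$ (so $\hat\delta=0$ and $y=x_c$) the inner minimum is read as $+\infty$.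
   Context: $\hat\delta$ equals $x^*(x_c)-x_c$, where $x^*(x_c)=x_c+\varepsilon\,\mathrm{sign}(\nabla J(x_c))$ is the maximizer of the supremum defining $\overline{J}^1(x_c)$ for $p=\infty$. *)

theory Defs
  imports "HOL-Analysis.Analysis"
begin

definition linf_box :: "real^'n \<Rightarrow> real \<Rightarrow> (real^'n) set" where
  "linf_box xc eps = {x. \<forall>i. \<bar>x $ i - xc $ i\<bar> \<le> eps}"

definition Jbar1 :: "(real^'n \<Rightarrow> real) \<Rightarrow> (real^'n \<Rightarrow> real^'n) \<Rightarrow> real \<Rightarrow> (real^'n) set \<Rightarrow> real^'n \<Rightarrow> real" where
  "Jbar1 J gradJ lam X y = J y + (SUP x\<in>X. gradJ y \<bullet> (x - y) + lam / 2 * (norm (x - y))\<^sup>2)"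

definition sign_dir :: "real \<Rightarrow> real^'n \<Rightarrow> real^'n" where
  "sign_dir eps v = (\<chi> i. eps * sgn (v $ i))"

end

theory Submission
  imports Defs
begin

lemma box_eq: "linf_box xc eps = cbox (xc - (\<chi> i. eps)) (xc + (\<chi> i. eps))"
  by (auto simp: linf_box_def mem_box_cart abs_le_iff algebra_simps)

lemma box_convex: "convex (linf_box xc eps)"
  by (simp add: box_eq)

lemma coord_bound:
  fixes a d u lam eta eps :: real
  assumes "\<bar>d\<bar> = eps" "\<bar>u\<bar> \<le> eps" "a * d \<ge> lam * eta * eps^2" "lam > 0" "eps > 0"
  shows "a * (u - eta * d) + lam / 2 * (u - eta * d)^2 \<le> a * d * (1 - eta) + lam / 2 * (d^2 * (1 - eta)^2)"
proof -
  have eq: "a * d * (1 - eta) + lam / 2 * (d^2 * (1 - eta)^2) - (a * (u - eta * d) + lam / 2 * (u - eta * d)^2)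
     = (d - u) * (a + lam / 2 * (d + u) - lam * eta * d)"
    by (simp add: field_simps power2_eq_square)
  have "(d - u) * (a + lam / 2 * (d + u) - lam * eta * d) \<ge> 0"
  proof (cases "d \<ge> 0")
    case True
    then have d: "d = eps" using assms by auto
    have "a * eps \<ge> lam * eta * eps * eps" using assms(3) d by (simp add: power2_eq_square)
    then have "a \<ge> lam * eta * eps" using assms(5) by simp
    moreover have "lam / 2 * (eps + u) \<ge> 0" using assms by auto
    ultimately have "a + lam / 2 * (eps + u) - lam * eta * eps \<ge> 0" by linarith
    then have "a + lam / 2 * (d + u) - lam * eta * d \<ge> 0" using d by simp
    moreover have "d - u \<ge> 0" using assms d by auto
    ultimately show ?thesis by simp
  next
    case False
    then have d: "d = - eps" using assms by auto
    have "- a * eps \<ge> lam * eta * eps * eps" using assms(3) d by (simp add: power2_eq_square)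
    then have "- a \<ge> lam * eta * eps" using assms(5) mult_right_le_imp_le[of "lam*eta*eps" eps "-a"] by simp
    moreover have "lam / 2 * (- eps + u) \<le> 0" using assms by (auto simp: mult_nonneg_nonpos)
    ultimately have "a + lam / 2 * (- eps + u) - lam * eta * (- eps) \<le> 0" by linarith
    then have "a + lam / 2 * (d + u) - lam * eta * d \<le> 0" using d by simp
    moreover have "d - u \<le> 0" using assms d by auto
    ultimately show ?thesis by (simp add: mult_nonpos_nonpos)
  qed
  with eq show ?thesis by linarith
qed

theorem proposition5:
  fixes J :: "real^'n \<Rightarrow> real"
    and gradJ :: "real^'n \<Rightarrow> real^'n"
    and H :: "real^'n \<Rightarrow> ((real^'n) \<Rightarrow>\<^sub>L (real^'n))"
    and S :: "(real^'n) set"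
    and xc :: "real^'n" and eps lam eta :: real
  assumes eps_pos: "eps > 0"
    and lam_pos: "lam > 0"
    and S_open: "open S"
    and X_sub: "linf_box xc eps \<subseteq> S"
    and grad: "\<And>x. x \<in> S \<Longrightarrow> (J has_derivative (\<lambda>h. gradJ x \<bullet> h)) (at x)"
    and hess: "\<And>x. x \<in> S \<Longrightarrow> (gradJ has_derivative blinfun_apply (H x)) (at x)"
    and hess_cont: "continuous_on S H"
    and hess_bound: "\<And>x. x \<in> linf_box xc eps \<Longrightarrow> norm (H x) \<le> lam"
    and eta_nonneg: "0 \<le> eta"
    and eta_le_one: "eta \<le> 1"
    and eta_le: "gradJ xc \<noteq> 0 \<Longrightarrow>
        \<forall>i. eta \<le> \<bar>gradJ xc $ i\<bar> /
               (lam * (norm (sign_dir eps (gradJ xc)) + \<bar>sign_dir eps (gradJ xc) $ i\<bar>))"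
  shows "Jbar1 J gradJ lam (linf_box xc eps) (xc + eta *\<^sub>R sign_dir eps (gradJ xc))
         \<le> Jbar1 J gradJ lam (linf_box xc eps) xc"
proof (cases "eta = 0 \<or> gradJ xc = 0")
  case True
  then have "sign_dir eps (gradJ xc) = 0 \<or> eta = 0"
    by (auto simp: sign_dir_def vec_eq_iff)
  then show ?thesis by auto
next
  case False
  then have eta_pos: "eta > 0" and gnz: "gradJ xc \<noteq> 0" using eta_nonneg by auto
  define B where "B = linf_box xc eps"
  define g where "g = gradJ xc"
  define d where "d = sign_dir eps (gradJ xc)"
  define y where "y = xc + eta *\<^sub>R d"
  have convB: "convex B" unfolding B_def by (rule box_convex)
  have xcB: "xc \<in> B" using eps_pos by (auto simp: B_def linf_box_def)
  have BS: "B \<subseteq> S" using X_sub B_def by simp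
  have gi_nz: "g $ i \<noteq> 0" for i
  proof
    assume "g $ i = 0"
    then have "eta \<le> 0" using eta_le[OF gnz, rule_format, of i] by (simp add: g_def)
    then show False using eta_pos by simp
  qed
  have d_i: "d $ i = eps * sgn (g $ i)" for i by (simp add: d_def sign_dir_def g_def)
  have absd: "\<bar>d $ i\<bar> = eps" for i using gi_nz[of i] eps_pos by (auto simp: d_i abs_mult sgn_if)
  have gd: "g $ i * d $ i = eps * \<bar>g $ i\<bar>" for i by (auto simp: d_i sgn_if)
  have eta_i: "eta * (lam * (norm d + eps)) \<le> \<bar>g $ i\<bar>" for i
  proof -
    have "lam * (norm d + eps) > 0" using lam_pos eps_pos by (simp add: add_nonneg_pos)
    moreover have "eta \<le> \<bar>g $ i\<bar> / (lam * (norm d + eps))"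
      using eta_le[OF gnz, rule_format, of i] absd[of i] by (simp add: g_def d_def)
    ultimately show ?thesis by (simp add: pos_le_divide_eq mult.commute)
  qed
  have inB: "xc + t *\<^sub>R d \<in> B" if "0 \<le> t" "t \<le> 1" for t
  proof -
    have "\<bar>t * d $ i\<bar> \<le> eps" for i
      using that absd[of i] eps_pos mult_right_mono[of t 1 eps] by (simp add: abs_mult)
    then show ?thesis by (simp add: B_def linf_box_def)
  qed
  have yB: "y \<in> B" using inB[of eta] eta_nonneg eta_le_one by (simp add: y_def)
  have glip: "norm (gradJ z - g) \<le> lam * norm (z - xc)" if "z \<in> B" for z
  proof -
    have "norm (gradJ z - gradJ xc) \<le> lam * norm (z - xc)"
    proof (rule differentiable_bound[OF convB _ _ that xcB, where f'="\<lambda>x. blinfun_apply (H x)"])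
      fix x assume "x \<in> B"
      then show "(gradJ has_derivative blinfun_apply (H x)) (at x within B)"
        using hess BS by (auto intro: has_derivative_at_withinI)
      show "onorm (blinfun_apply (H x)) \<le> lam"
        using hess_bound \<open>x \<in> B\<close> by (simp add: B_def norm_blinfun.rep_eq[symmetric])
    qed
    then show ?thesis by (simp add: g_def)
  qed
  have taylor: "J y \<le> J xc + g \<bullet> (y - xc) + lam / 2 * (norm (y - xc))^2"
  proof -
    define h where "h = y - xc"
    define psi where "psi = (\<lambda>t. J (xc + t *\<^sub>R h) - t * (g \<bullet> h) - lam / 2 * t^2 * (norm h)^2)"
    have hyp: "xc + t *\<^sub>R h \<in> B" if "0 \<le> t" "t \<le> 1" for t
    proof -
      have "xc + t *\<^sub>R h = xc + (t * eta) *\<^sub>R d" by (simp add: h_def y_def)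
      also have "\<dots> \<in> B" using that eta_nonneg eta_le_one by (intro inB) (auto intro: mult_le_one)
      finally show ?thesis .
    qed
    have der: "(psi has_real_derivative (gradJ (xc + t *\<^sub>R h) \<bullet> h - g \<bullet> h - lam * t * (norm h)^2)) (at t)"
      if "0 \<le> t" "t \<le> 1" for t
    proof -
      have J': "(J has_derivative (\<lambda>v. gradJ (xc + t *\<^sub>R h) \<bullet> v)) (at (xc + t *\<^sub>R h))"
        using grad hyp[OF that] BS by auto
      have l: "((\<lambda>s. xc + s *\<^sub>R h) has_derivative (\<lambda>s. s *\<^sub>R h)) (at t)"
        by (auto intro!: derivative_eq_intros)
      have "((\<lambda>s. J (xc + s *\<^sub>R h)) has_derivative (\<lambda>s. gradJ (xc + t *\<^sub>R h) \<bullet> (s *\<^sub>R h))) (at t)"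
        using has_derivative_compose[OF l J'] by (simp add: o_def)
      then have "((\<lambda>s. J (xc + s *\<^sub>R h)) has_real_derivative (gradJ (xc + t *\<^sub>R h) \<bullet> h)) (at t)"
        by (rule has_derivative_imp_has_field_derivative) (simp add: mult.commute)
      then show ?thesis unfolding psi_def
        by (auto intro!: derivative_eq_intros)
    qed
    have "psi 1 \<le> psi 0"
    proof -
      obtain z where z: "0 < z" "z < 1" "psi 1 - psi 0 = (1 - 0) * (gradJ (xc + z *\<^sub>R h) \<bullet> h - g \<bullet> h - lam * z * (norm h)^2)"
        using MVT2[of 0 1 psi, OF _ der] by auto
      have "gradJ (xc + z *\<^sub>R h) \<bullet> h - g \<bullet> h = (gradJ (xc + z *\<^sub>R h) - g) \<bullet> h"
        by (simp add: inner_diff_left)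
      also have "\<dots> \<le> norm (gradJ (xc + z *\<^sub>R h) - g) * norm h" by (rule norm_cauchy_schwarz)
      also have "\<dots> \<le> lam * norm (z *\<^sub>R h) * norm h"
        using glip[OF hyp[of z]] z by (intro mult_right_mono) auto
      also have "\<dots> = lam * z * (norm h)^2" using z by (simp add: power2_eq_square)
      finally show ?thesis using z by simp
    qed
    then show ?thesis by (simp add: psi_def h_def)
  qed
  define a where "a = gradJ y"
  have agl: "norm (a - g) \<le> lam * eta * norm d"
    using glip[OF yB] eta_nonneg by (simp add: a_def y_def)
  have ad_i: "a $ i * d $ i \<ge> lam * eta * eps^2" for i
  proof -
    have c: "\<bar>a $ i - g $ i\<bar> \<le> lam * eta * norm d"
      using component_le_norm_cart[of "a - g" i] agl by simp
    have "a $ i * d $ i = g $ i * d $ i + (a $ i - g $ i) * d $ i" by (simp add: algebra_simps)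
    also have "\<dots> \<ge> eps * \<bar>g $ i\<bar> - lam * eta * norm d * eps"
    proof -
      have "\<bar>(a $ i - g $ i) * d $ i\<bar> \<le> lam * eta * norm d * eps"
        using c absd[of i] eps_pos by (simp add: abs_mult mult_right_mono)
      then show ?thesis using gd[of i] by linarith
    qed
    finally have "a $ i * d $ i \<ge> eps * (\<bar>g $ i\<bar> - lam * eta * norm d)" by (simp add: algebra_simps)
    moreover have "\<bar>g $ i\<bar> - lam * eta * norm d \<ge> lam * eta * eps"
      using eta_i[of i] by (simp add: algebra_simps)
    ultimately show ?thesis using eps_pos
      by (smt (verit, ccfv_SIG) mult.assoc mult.commute mult_left_mono power2_eq_square)
  qed
  have nsq: "(norm v)^2 = (\<Sum>i\<in>UNIV. (v $ i)^2)" for v :: "real^'n"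
    by (simp only: power2_norm_eq_inner inner_vec_def inner_real_def) (simp add: power2_eq_square)
  have main: "a \<bullet> (x - y) + lam / 2 * (norm (x - y))^2 \<le> (1 - eta) * (a \<bullet> d) + lam / 2 * (1 - eta)^2 * (norm d)^2"
    if "x \<in> B" for x
  proof -
    have "a \<bullet> (x - y) + lam / 2 * (norm (x - y))^2 = (\<Sum>i\<in>UNIV. a $ i * ((x - y) $ i) + lam / 2 * ((x - y) $ i)^2)"
      by (simp add: nsq[of "x - y"] inner_vec_def sum.distrib sum_distrib_left)
    also have "\<dots> = (\<Sum>i\<in>UNIV. a $ i * ((x $ i - xc $ i) - eta * d $ i) + lam / 2 * ((x $ i - xc $ i) - eta * d $ i)^2)"
      by (simp add: y_def algebra_simps)
    also have "\<dots> \<le> (\<Sum>i\<in>UNIV. a $ i * d $ i * (1 - eta) + lam / 2 * ((d $ i)^2 * (1 - eta)^2))"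
      using that by (intro sum_mono coord_bound[OF absd _ ad_i lam_pos eps_pos]) (auto simp: B_def linf_box_def)
    also have "\<dots> = (1 - eta) * (a \<bullet> d) + lam / 2 * (1 - eta)^2 * (norm d)^2"
      by (simp add: nsq[of d] inner_vec_def sum.distrib sum_distrib_left sum_distrib_right mult_ac)
    finally show ?thesis .
  qed
  have adg: "a \<bullet> d \<le> g \<bullet> d + lam * eta * (norm d)^2"
  proof -
    have "a \<bullet> d = g \<bullet> d + (a - g) \<bullet> d" by (simp add: inner_diff_left)
    also have "(a - g) \<bullet> d \<le> norm (a - g) * norm d" by (rule norm_cauchy_schwarz)
    also have "\<dots> \<le> lam * eta * norm d * norm d" using agl by (simp add: mult_right_mono)
    finally show ?thesis by (simp add: power2_eq_square mult.assoc)
  qed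
  define V where "V = J xc + g \<bullet> d + lam / 2 * (norm d)^2"
  have upper: "Jbar1 J gradJ lam B y \<le> V"
  proof -
    have "(SUP x\<in>B. a \<bullet> (x - y) + lam / 2 * (norm (x - y))\<^sup>2) \<le> (1 - eta) * (a \<bullet> d) + lam / 2 * (1 - eta)^2 * (norm d)^2"
      using xcB main by (intro cSUP_least) auto
    also have "\<dots> \<le> (1 - eta) * (g \<bullet> d + lam * eta * (norm d)^2) + lam / 2 * (1 - eta)^2 * (norm d)^2"
      using adg eta_le_one by (intro add_right_mono mult_left_mono) auto
    finally have s: "(SUP x\<in>B. a \<bullet> (x - y) + lam / 2 * (norm (x - y))\<^sup>2) \<le> \<dots>" .
    have t: "J y \<le> J xc + eta * (g \<bullet> d) + lam / 2 * eta^2 * (norm d)^2"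
      using taylor eta_nonneg by (simp add: y_def power_mult_distrib)
    have "J y + (SUP x\<in>B. a \<bullet> (x - y) + lam / 2 * (norm (x - y))\<^sup>2) \<le>
       J xc + eta * (g \<bullet> d) + lam / 2 * eta^2 * (norm d)^2 + ((1 - eta) * (g \<bullet> d + lam * eta * (norm d)^2) + lam / 2 * (1 - eta)^2 * (norm d)^2)"
      using s t by linarith
    also have "\<dots> = V" by (simp add: V_def field_simps power2_eq_square)
    finally show ?thesis by (simp add: Jbar1_def a_def)
  qed
  have lower: "V \<le> Jbar1 J gradJ lam B xc"
  proof -
    have bdd: "bdd_above ((\<lambda>x. g \<bullet> (x - xc) + lam / 2 * (norm (x - xc))\<^sup>2) ` B)"
    proof -
      have "compact ((\<lambda>x. g \<bullet> (x - xc) + lam / 2 * (norm (x - xc))\<^sup>2) ` B)"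
        unfolding B_def box_eq by (intro compact_continuous_image continuous_intros compact_cbox)
      then show ?thesis by (intro bounded_imp_bdd_above compact_imp_bounded)
    qed
    have "xc + d \<in> B" using inB[of 1] by simp
    then have "g \<bullet> d + lam / 2 * (norm d)^2 \<le> (SUP x\<in>B. g \<bullet> (x - xc) + lam / 2 * (norm (x - xc))\<^sup>2)"
      using cSUP_upper[OF _ bdd, of "xc + d"] by simp
    then show ?thesis by (simp add: V_def Jbar1_def g_def)
  qed
  show ?thesis using upper lower by (simp add: B_def y_def d_def)
qed

end
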